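(* Let $G$ be a group with a conjugation-closed generating set $X$, let $g\in\mathrm{Mon}(X)$ and $n=\ell(g)$. The maps $L\colon\mathrm{Fact}(G,g,\mathbf I)\to\mathrm{Comp}(\mathbb Z,n,\mathbf I)$ and $\overline L\colon\mathrm{Fact}(G,g,\mathbf S)\to\mathrm{Comp}(\mathbb Z,n,\mathbf S)$ are surjective order-preserving maps, and $\overline L\circ q=q\circ L$.
   Context: $\mathrm{Mon}(X)$ is the generated submonoid; $\ell(x)$ is the minimal length of a product of elements of $X$ equal to $x$. A linear factorization of $g$ is a row vector $[x_L\ x_1\ \cdots\ x_k\ x_R]$ ($k\ge0$) of elements of $\mathrm{Mon}(X)$ with $x_1,\dots,x_k\ne1$, $\ell(x_L)+\sum_i\ell(x_i)+\ell(x_R)=\ell(g)$ and $x_Lx_1\cdots x_kx_R=g$. With $x_0=x_L$, $x_{k+1}=x_R$, the merge at position $i\in\{0,\dots,k\}$ replaces $x_i,x_{i+1}$ by the single entry $x_ix_{i+1}$. $\mathrm{Fact}(G,g,\mathbf I)$ is the set of linear factorizations ordered by $\mathbf x\le\mathbf y$ iff $\mathbf x$ is obtained from $\mathbf y$ by merges. Two linear factorizations $[x_L\ x_1\cdots x_k\ x_R]$ and $[y_L\ y_1\cdots y_k\ y_R]$ of the same length are equivalent iff $x_i=y_i$ for $1\le i\le k$; the classes are circular factorizations, $\mathrm{Fact}(G,g,\mathbf S)$ is the set of classes with $\bar{\mathbf x}\le\bar{\mathbf y}$ iff $\mathbf x'\le\mathbf y'$ for some representatives, and $q$ is the quotient map.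 Each class has a unique representative with last entry $1$, namely $[gx_Rg^{-1}x_L\ x_1\cdots x_k\ 1]$. For $G=\mathbb Z$, $X=\{1\}$ (additive notation) these are linear compositions $\mathrm{Comp}(\mathbb Z,n,\mathbf I)$ and circular compositions $\mathrm{Comp}(\mathbb Z,n,\mathbf S)$, with quotient map also denoted $q$. $L([x_L\ x_1\cdots x_k\ x_R])=[\ell(x_L)\ \ell(x_1)\cdots\ell(x_k)\ \ell(x_R)]$, and $\overline L$ sends the class with representative $[x_L\ x_1\cdots x_k\ 1]$ to the class of $[\ell(x_L)\ \ell(x_1)\cdots\ell(x_k)\ 0]$. *)

theory Defs
  imports "HOL-Algebra.Generated_Groups" "HOL-Algebra.Elementary_Groups"
begin

definition mon_gen :: "('a, 'b) monoid_scheme \<Rightarrow> 'a set \<Rightarrow> 'a set" where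
  "mon_gen G X = (\<lambda>xs. foldr (monoid.mult G) xs (one G)) ` {xs. set xs \<subseteq> X}"

definition word_len :: "('a, 'b) monoid_scheme \<Rightarrow> 'a set \<Rightarrow> 'a \<Rightarrow> nat" where
  "word_len G X x = (LEAST n. \<exists>xs. length xs = n \<and> set xs \<subseteq> X \<and> foldr (monoid.mult G) xs (one G) = x)"

definition conj_closed :: "('a, 'b) monoid_scheme \<Rightarrow> 'a set \<Rightarrow> bool" where
  "conj_closed G X \<longleftrightarrow> (\<forall>h\<in>carrier G. \<forall>x\<in>X. h \<otimes>\<^bsub>G\<^esub> x \<otimes>\<^bsub>G\<^esub> m_inv G h \<in> X)"

text \<open>A linear factorization [x_L x_1 ... x_k x_R] is a list of length k+2.\<close>

definition lin_fact :: "('a, 'b) monoid_scheme \<Rightarrow> 'a set \<Rightarrow> 'a \<Rightarrow> 'a list set" where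
  "lin_fact G X g = {fs. 2 \<le> length fs \<and> set fs \<subseteq> mon_gen G X
      \<and> (\<forall>i. 0 < i \<and> i < length fs - 1 \<longrightarrow> fs ! i \<noteq> (one G))
      \<and> sum_list (map (word_len G X) fs) = word_len G X g
      \<and> foldr (monoid.mult G) fs (one G) = g}"

definition merge_at :: "('a, 'b) monoid_scheme \<Rightarrow> nat \<Rightarrow> 'a list \<Rightarrow> 'a list" where
  "merge_at G i fs = take i fs @ [fs ! i \<otimes>\<^bsub>G\<^esub> fs ! (i + 1)] @ drop (i + 2) fs"

definition merge_step :: "('a, 'b) monoid_scheme \<Rightarrow> 'a list \<Rightarrow> 'a list \<Rightarrow> bool" where
  "merge_step G xs ys \<longleftrightarrow> (\<exists>i. i + 2 \<le> length ys \<and> xs = merge_at G i ys)"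

definition fact_le :: "('a, 'b) monoid_scheme \<Rightarrow> 'a list \<Rightarrow> 'a list \<Rightarrow> bool" where
  "fact_le G = (merge_step G)\<^sup>*\<^sup>*"

definition circ_equiv :: "('a, 'b) monoid_scheme \<Rightarrow> 'a set \<Rightarrow> 'a \<Rightarrow> ('a list \<times> 'a list) set" where
  "circ_equiv G X g = {(xs, ys). xs \<in> lin_fact G X g \<and> ys \<in> lin_fact G X g
      \<and> length xs = length ys \<and> (\<forall>i. 0 < i \<and> i < length xs - 1 \<longrightarrow> xs ! i = ys ! i)}"

definition circ_fact :: "('a, 'b) monoid_scheme \<Rightarrow> 'a set \<Rightarrow> 'a \<Rightarrow> 'a list set set" where
  "circ_fact G X g = lin_fact G X g // circ_equiv G X g"

definition circ_class :: "('a, 'b) monoid_scheme \<Rightarrow> 'a set \<Rightarrow> 'a \<Rightarrow> 'a list \<Rightarrow> 'a list set" where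
  "circ_class G X g xs = circ_equiv G X g `` {xs}"

definition circ_le :: "('a, 'b) monoid_scheme \<Rightarrow> 'a list set \<Rightarrow> 'a list set \<Rightarrow> bool" where
  "circ_le G A B \<longleftrightarrow> (\<exists>xs\<in>A. \<exists>ys\<in>B. fact_le G xs ys)"

abbreviation lin_comp :: "nat \<Rightarrow> int list set" where
  "lin_comp n \<equiv> lin_fact integer_group {1} (int n)"

abbreviation circ_comp :: "nat \<Rightarrow> int list set set" where
  "circ_comp n \<equiv> circ_fact integer_group {1} (int n)"

definition Lmap :: "('a, 'b) monoid_scheme \<Rightarrow> 'a set \<Rightarrow> 'a list \<Rightarrow> int list" where
  "Lmap G X fs = map (\<lambda>x. int (word_len G X x)) fs"

definition Lbar :: "('a, 'b) monoid_scheme \<Rightarrow> 'a set \<Rightarrow> 'a \<Rightarrow> 'a list set \<Rightarrow> int list set" where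
  "Lbar G X g A = circ_class integer_group {1} (int (word_len G X g))
      (Lmap G X (THE r. r \<in> A \<and> last r = (one G)))"

end

theory Submission
  imports Defs
begin


abbreviation fp :: "('a, 'b) monoid_scheme \<Rightarrow> 'a list \<Rightarrow> 'a" where
  "fp G xs \<equiv> foldr (monoid.mult G) xs (one G)"

context monoid begin

lemma fp_closed: "set xs \<subseteq> carrier G \<Longrightarrow> fp G xs \<in> carrier G"
  by (induction xs) auto

lemma fp_append: "set xs \<subseteq> carrier G \<Longrightarrow> set ys \<subseteq> carrier G \<Longrightarrow>
   fp G (xs @ ys) = fp G xs \<otimes> fp G ys"
  by (induction xs) (auto simp: m_assoc fp_closed)

lemma fp_concat: "\<forall>b\<in>set bs. set b \<subseteq> carrier G \<Longrightarrow> fp G (concat bs) = fp G (map (fp G) bs)"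
proof (induction bs)
  case (Cons a bs)
  have "set (concat bs) \<subseteq> carrier G" using Cons by auto
  then have "fp G (concat (a # bs)) = fp G a \<otimes> fp G (concat bs)"
    using Cons by (simp add: fp_append del: foldr_append)
  then show ?case using Cons by simp
qed simp

lemma mon_gen_sub: "X \<subseteq> carrier G \<Longrightarrow> mon_gen G X \<subseteq> carrier G"
  unfolding mon_gen_def using fp_closed by blast

lemma one_mon_gen: "\<one> \<in> mon_gen G X"
  unfolding mon_gen_def by (rule image_eqI[of _ _ "[]"]) auto

lemma mon_gen_mult: "X \<subseteq> carrier G \<Longrightarrow> x \<in> mon_gen G X \<Longrightarrow> y \<in> mon_gen G X \<Longrightarrow> x \<otimes> y \<in> mon_gen G X"
  unfolding mon_gen_def
  apply clarify
  subgoal for xs ys by (rule image_eqI[of _ _ "xs @ ys"]) (auto simp: fp_append simp del: foldr_append)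
  done

lemma word_len_wit: assumes "x \<in> mon_gen G X"
  shows "\<exists>ws. length ws = word_len G X x \<and> set ws \<subseteq> X \<and> fp G ws = x"
proof -
  from assms obtain ws where "set ws \<subseteq> X" "fp G ws = x" unfolding mon_gen_def by auto
  then have "\<exists>n ws. length ws = n \<and> set ws \<subseteq> X \<and> fp G ws = x" by blast
  then show ?thesis unfolding word_len_def by (rule LeastI_ex)
qed

lemma word_len_le: "set ws \<subseteq> X \<Longrightarrow> fp G ws = x \<Longrightarrow> word_len G X x \<le> length ws"
  unfolding word_len_def by (rule Least_le) blast

lemma word_len_one: "word_len G X \<one> = 0"
  using word_len_le[of "[]" X "\<one>"] by simp

lemma word_len_zero: assumes "x \<in> mon_gen G X" "word_len G X x = 0" shows "x = \<one>"
  using word_len_wit[OF assms(1)] assms(2) by auto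

lemma word_len_mult: assumes "X \<subseteq> carrier G" "x \<in> mon_gen G X" "y \<in> mon_gen G X"
  shows "word_len G X (x \<otimes> y) \<le> word_len G X x + word_len G X y"
proof -
  obtain xs where xs: "length xs = word_len G X x" "set xs \<subseteq> X" "fp G xs = x" using word_len_wit[OF assms(2)] by blast
  obtain ys where ys: "length ys = word_len G X y" "set ys \<subseteq> X" "fp G ys = y" using word_len_wit[OF assms(3)] by blast
  have "fp G (xs @ ys) = x \<otimes> y" using xs ys assms(1) by (simp add: fp_append del: foldr_append)
  then have "word_len G X (x \<otimes> y) \<le> length (xs @ ys)" using xs ys by (intro word_len_le) auto
  then show ?thesis using xs ys by simp
qed

lemma fp_mon_gen: "X \<subseteq> carrier G \<Longrightarrow> set fs \<subseteq> mon_gen G X \<Longrightarrow> fp G fs \<in> mon_gen G X"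
  by (induction fs) (auto simp: one_mon_gen mon_gen_mult)

lemma word_len_fp: "X \<subseteq> carrier G \<Longrightarrow> set fs \<subseteq> mon_gen G X \<Longrightarrow>
   word_len G X (fp G fs) \<le> sum_list (map (word_len G X) fs)"
proof (induction fs)
  case Nil then show ?case by (simp add: word_len_one)
next
  case (Cons a fs)
  then have "word_len G X (fp G (a # fs)) \<le> word_len G X a + word_len G X (fp G fs)"
    by (auto intro!: word_len_mult fp_mon_gen)
  then show ?case using Cons by simp
qed

end

context group begin

lemma fp_conj: "set ws \<subseteq> carrier G \<Longrightarrow> h \<in> carrier G \<Longrightarrow>
   fp G (map (\<lambda>w. h \<otimes> w \<otimes> inv h) ws) = h \<otimes> fp G ws \<otimes> inv h"
proof (induction ws)
  case Nil then show ?case by simp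
next
  case (Cons a ws)
  have c: "fp G ws \<in> carrier G" using Cons by (auto intro: fp_closed)
  have "fp G (map (\<lambda>w. h \<otimes> w \<otimes> inv h) (a # ws)) = h \<otimes> a \<otimes> inv h \<otimes> (h \<otimes> fp G ws \<otimes> inv h)"
    using Cons by simp
  also have "\<dots> = h \<otimes> (a \<otimes> (inv h \<otimes> (h \<otimes> (fp G ws \<otimes> inv h))))"
    using Cons c by (simp add: m_assoc)
  also have "inv h \<otimes> (h \<otimes> (fp G ws \<otimes> inv h)) = fp G ws \<otimes> inv h"
    using Cons c by (simp add: m_assoc[symmetric])
  also have "h \<otimes> (a \<otimes> (fp G ws \<otimes> inv h)) = h \<otimes> (a \<otimes> fp G ws) \<otimes> inv h"
    using Cons c by (simp add: m_assoc)
  finally show ?case by simp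
qed

lemma conj_mon_gen: assumes "X \<subseteq> carrier G" "conj_closed G X" "x \<in> mon_gen G X" "h \<in> carrier G"
  shows "h \<otimes> x \<otimes> inv h \<in> mon_gen G X \<and> word_len G X (h \<otimes> x \<otimes> inv h) \<le> word_len G X x"
proof -
  obtain xs where xs: "length xs = word_len G X x" "set xs \<subseteq> X" "fp G xs = x" using word_len_wit[OF assms(3)] by blast
  let ?ys = "map (\<lambda>w. h \<otimes> w \<otimes> inv h) xs"
  have s: "set ?ys \<subseteq> X" using xs(2) assms(2,4) unfolding conj_closed_def by auto
  have f: "fp G ?ys = h \<otimes> x \<otimes> inv h" using fp_conj[of xs h] xs assms by auto
  have "h \<otimes> x \<otimes> inv h \<in> mon_gen G X" using s f[symmetric] unfolding mon_gen_def by (intro image_eqI[of _ _ ?ys]) auto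
  moreover have "word_len G X (h \<otimes> x \<otimes> inv h) \<le> length ?ys" by (rule word_len_le[OF s f])
  ultimately show ?thesis using xs by simp
qed

end




lemma decomp4: "i + 2 \<le> length z \<Longrightarrow> \<exists>A a b B. z = A @ a # b # B \<and> length A = i"
proof -
  assume i: "i + 2 \<le> length z"
  have "drop i z = z!i # drop (Suc i) z" using i by (simp add: Cons_nth_drop_Suc)
  moreover have "drop (Suc i) z = z!(Suc i) # drop (Suc (Suc i)) z" using i by (simp add: Cons_nth_drop_Suc)
  ultimately have "z = take i z @ z!i # z!(Suc i) # drop (Suc (Suc i)) z"
    by (metis append_take_drop_id)
  then show ?thesis using i by (intro exI[of _ "take i z"]) auto
qed

lemma merge_at_decomp: "length A = i \<Longrightarrow> merge_at G i (A @ a # b # B) = A @ (a \<otimes>\<^bsub>G\<^esub> b) # B"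
  unfolding merge_at_def by (simp add: nth_append)

context group begin

lemma lin_fact_merge:
  assumes X: "X \<subseteq> carrier G" and ys: "A @ a # b # B \<in> lin_fact G X g"
    and len: "A \<noteq> [] \<or> B \<noteq> []"
  shows "A @ (a \<otimes> b) # B \<in> lin_fact G X g \<and> word_len G X (a \<otimes> b) = word_len G X a + word_len G X b"
proof -
  let ?ys = "A @ a # b # B" and ?ms = "A @ (a \<otimes> b) # B"
  let ?l = "word_len G X"
  have sm: "set ?ys \<subseteq> mon_gen G X" "2 \<le> length ?ys" and nz: "\<forall>i. 0 < i \<and> i < length ?ys - 1 \<longrightarrow> ?ys ! i \<noteq> \<one>"
    and sl: "sum_list (map ?l ?ys) = ?l g" and pr: "fp G ?ys = g"
    using ys unfolding lin_fact_def by auto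
  have mc: "mon_gen G X \<subseteq> carrier G" using mon_gen_sub[OF X] .
  have a: "a \<in> mon_gen G X" and b: "b \<in> mon_gen G X" and sA: "set A \<subseteq> mon_gen G X" and sB: "set B \<subseteq> mon_gen G X"
    using sm by auto
  have ab: "a \<otimes> b \<in> mon_gen G X" using mon_gen_mult[OF X a b] .
  have sms: "set ?ms \<subseteq> mon_gen G X" using sA sB ab by auto
  have ca: "a \<in> carrier G" "b \<in> carrier G" "set A \<subseteq> carrier G" "set B \<subseteq> carrier G" "fp G B \<in> carrier G"
    using a b sA sB mc by (auto intro!: fp_closed)
  have "fp G ?ms = fp G A \<otimes> fp G ((a \<otimes> b) # B)"
    using ca by (intro fp_append) auto
  also have "\<dots> = fp G A \<otimes> fp G (a # b # B)" using ca by (simp add: m_assoc)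
  also have "\<dots> = fp G ?ys" using ca by (intro fp_append[symmetric]) auto
  finally have prm: "fp G ?ms = g" using pr by simp
  have "?l g \<le> sum_list (map ?l ?ms)" using word_len_fp[OF X sms] prm by simp
  moreover have "?l (a \<otimes> b) \<le> ?l a + ?l b" by (rule word_len_mult[OF X a b])
  ultimately have eq: "?l (a \<otimes> b) = ?l a + ?l b" using sl by simp
  have slm: "sum_list (map ?l ?ms) = ?l g" using sl eq by simp
  have nzm: "?ms ! j \<noteq> \<one>" if j: "0 < j" "j < length ?ms - 1" for j
  proof (cases "j < length A")
    case True
    then have "?ms ! j = ?ys ! j" by (simp add: nth_append)
    then show ?thesis using nz j True by auto
  next
    case False
    show ?thesis
    proof (cases "j = length A")
      case True
      then have "?ys ! j = a" by simp
      then have "a \<noteq> \<one>" using nz j True by auto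
      then have "?l a \<noteq> 0" using word_len_zero[OF a] by auto
      then have "?l (a \<otimes> b) \<noteq> 0" using eq by simp
      then have "a \<otimes> b \<noteq> \<one>" using word_len_one[of X] by auto
      then show ?thesis using True by simp
    next
      case F2: False
      then have jj: "j > length A" using False by simp
      from less_imp_Suc_add[OF jj] obtain k where k: "j = Suc (length A + k)" by blast
      have e: "?ms ! j = ?ys ! (Suc j)" using k by (simp add: nth_append)
      have "0 < Suc j \<and> Suc j < length ?ys - 1" using j by simp
      then have "?ys ! Suc j \<noteq> \<one>" using nz by blast
      then show ?thesis unfolding e .
    qed
  qed
  have "2 \<le> length ?ms" using len by (cases A; cases B) auto
  then have "?ms \<in> lin_fact G X g" unfolding lin_fact_def
    using sms slm prm nzm by blast
  then show ?thesis using eq by simp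
qed

end

lemma integer_group_mult_fun [simp]: "monoid.mult integer_group = (+)"
  by (auto simp: integer_group_def)

lemma fpZ0 [simp]: "foldr (+) xs (0::int) = sum_list xs"
  by (induction xs) auto

lemma fpZ [simp]: "fp integer_group xs = sum_list xs"
  by (simp add: integer_group_mult_fun)

lemma fpZ' [simp]: "foldr (monoid.mult integer_group) xs 0 = sum_list xs"
  by (simp add: integer_group_mult_fun)

lemma fp_rep: "fp integer_group (replicate k 1) = int k"
  by (induction k) auto

lemma sum_ones: "set ws \<subseteq> {1::int} \<Longrightarrow> sum_list ws = int (length ws)"
  by (induction ws) auto

lemma mon_genZ: "mon_gen integer_group {1} = {x. 0 \<le> x}"
proof
  show "mon_gen integer_group {1} \<subseteq> {x. 0 \<le> x}"
    unfolding mon_gen_def by (auto simp: fpZ sum_ones)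
  show "{x. 0 \<le> x} \<subseteq> mon_gen integer_group {1}"
  proof
    fix x :: int assume "x \<in> {x. 0 \<le> x}"
    then have eq: "x = fp integer_group (replicate (nat x) 1)" by (subst fp_rep) simp
    show "x \<in> mon_gen integer_group {1}" unfolding mon_gen_def image_iff by (intro bexI[of _ "replicate (nat x) 1"] eq) (auto simp: sum_list_replicate simp del: foldr_replicate)
  qed
qed

lemma word_lenZ: "0 \<le> x \<Longrightarrow> word_len integer_group {1} x = nat x"
  unfolding word_len_def
proof (rule Least_equality)
  assume "0 \<le> x"
  then show "\<exists>xs. length xs = nat x \<and> set xs \<subseteq> {1} \<and> fp integer_group xs = x"
    by (intro exI[of _ "replicate (nat x) 1"] conjI) (auto simp: sum_list_replicate simp del: foldr_replicate)
next
  fix y assume "\<exists>xs. length xs = y \<and> set xs \<subseteq> {1} \<and> fp integer_group xs = x"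
  then show "nat x \<le> y" by (auto simp: fpZ sum_ones)
qed

lemma lin_comp_iff: "c \<in> lin_comp n \<longleftrightarrow> 2 \<le> length c \<and> (\<forall>x\<in>set c. 0 \<le> x)
   \<and> (\<forall>i. 0 < i \<and> i < length c - 1 \<longrightarrow> c ! i \<noteq> 0) \<and> sum_list c = int n"
proof -
  have 1: "sum_list (map (word_len integer_group {1}) c) = sum_list (map nat c)" if "\<forall>x\<in>set c. 0 \<le> x"
    using that by (induction c) (auto simp: word_lenZ)
  have 2: "int (sum_list (map nat c)) = sum_list c" if "\<forall>x\<in>set c. 0 \<le> x"
    using that by (induction c) auto
  have 3: "word_len integer_group {1} (int n) = n" by (simp add: word_lenZ)
  show ?thesis
  proof
    assume "c \<in> lin_comp n"
    then show "2 \<le> length c \<and> (\<forall>x\<in>set c. 0 \<le> x)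
   \<and> (\<forall>i. 0 < i \<and> i < length c - 1 \<longrightarrow> c ! i \<noteq> 0) \<and> sum_list c = int n"
      unfolding lin_fact_def mon_genZ by auto
  next
    assume a: "2 \<le> length c \<and> (\<forall>x\<in>set c. 0 \<le> x)
   \<and> (\<forall>i. 0 < i \<and> i < length c - 1 \<longrightarrow> c ! i \<noteq> 0) \<and> sum_list c = int n"
    then have "sum_list (map (word_len integer_group {1}) c) = word_len integer_group {1} (int n)"
    proof -
      have "int (sum_list (map nat c)) = int n" using a 2 by simp
      then have "sum_list (map nat c) = n" by (simp only: of_nat_eq_iff)
      then show ?thesis using a 1 3 by simp
    qed
    then show "c \<in> lin_comp n" unfolding lin_fact_def mon_genZ using a by auto
  qed
qed




lemma sum_list_int: "sum_list (map (\<lambda>x. int (f x)) xs) = int (sum_list (map f xs))"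
  by (induction xs) auto

lemma pointwise_eq: "list_all2 (\<le>) a b \<Longrightarrow> sum_list b \<le> sum_list a \<Longrightarrow> a = (b::nat list)"
proof (induction rule: list_all2_induct)
  case (Cons x xs y ys)
  have "sum_list xs \<le> sum_list ys" using Cons(2)
    by (induction rule: list_all2_induct) auto
  then show ?case using Cons by auto
qed simp

lemma split_blocks: "sum_list cs = length ws \<Longrightarrow>
  \<exists>bs. length bs = length cs \<and> concat bs = ws \<and> (\<forall>i<length cs. length (bs!i) = cs!i)"
proof (induction cs arbitrary: ws)
  case Nil then show ?case by simp
next
  case (Cons c cs)
  then have "sum_list cs = length (drop c ws)" by simp
  from Cons.IH[OF this] obtain bs where bs: "length bs = length cs" "concat bs = drop c ws"
    "\<forall>i<length cs. length (bs!i) = cs!i" by blast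
  have "length (take c ws) = c" using Cons.prems by simp
  then show ?case using bs
    by (intro exI[of _ "take c ws # bs"]) (auto simp: nth_Cons split: nat.split)
qed

context group begin

lemma L_into: assumes X: "X \<subseteq> carrier G" and xs: "xs \<in> lin_fact G X g"
  shows "Lmap G X xs \<in> lin_comp (word_len G X g)"
proof -
  have l: "2 \<le> length xs" and s: "set xs \<subseteq> mon_gen G X"
    and nz: "\<forall>i. 0 < i \<and> i < length xs - 1 \<longrightarrow> xs ! i \<noteq> \<one>"
    and sl: "sum_list (map (word_len G X) xs) = word_len G X g"
    using xs unfolding lin_fact_def by auto
  have nzL: "Lmap G X xs ! i \<noteq> 0" if "0 < i" "i < length xs - 1" for i
  proof -
    have "xs ! i \<noteq> \<one>" using nz that by blast
    moreover have "xs ! i \<in> mon_gen G X" using s that by auto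
    ultimately have "word_len G X (xs ! i) \<noteq> 0" using word_len_zero by blast
    then show ?thesis using that unfolding Lmap_def by simp
  qed
  have len: "length (Lmap G X xs) = length xs" unfolding Lmap_def by simp
  show ?thesis unfolding lin_comp_iff
  proof (intro conjI allI impI)
    show "2 \<le> length (Lmap G X xs)" using l len by simp
    show "\<forall>x\<in>set (Lmap G X xs). 0 \<le> x" unfolding Lmap_def by auto
    show "sum_list (Lmap G X xs) = int (word_len G X g)" unfolding Lmap_def using sl by (simp add: sum_list_int)
    fix i assume "0 < i \<and> i < length (Lmap G X xs) - 1"
    then show "Lmap G X xs ! i \<noteq> 0" using nzL len by simp
  qed
qed

lemma L_surj: assumes X: "X \<subseteq> carrier G" and g: "g \<in> mon_gen G X"
  and c: "c \<in> lin_comp (word_len G X g)"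
  shows "\<exists>xs\<in>lin_fact G X g. Lmap G X xs = c"
proof -
  let ?l = "word_len G X" let ?n = "word_len G X g"
  obtain ws where ws: "length ws = ?n" "set ws \<subseteq> X" "fp G ws = g" using word_len_wit[OF g] by blast
  have cl: "2 \<le> length c" and cnn: "\<forall>x\<in>set c. 0 \<le> x"
    and cnz: "\<forall>i. 0 < i \<and> i < length c - 1 \<longrightarrow> c ! i \<noteq> 0" and cs: "sum_list c = int ?n"
    using c unfolding lin_comp_iff by auto
  let ?cs = "map nat c"
  have "int (sum_list ?cs) = sum_list c" using cnn by (induction c) auto
  then have scs: "sum_list ?cs = length ws" using cs ws by simp
  obtain bs where bs: "length bs = length ?cs" "concat bs = ws" "\<forall>i<length ?cs. length (bs!i) = ?cs!i"
    using split_blocks[OF scs] by blast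
  have bX: "set b \<subseteq> X" if "b \<in> set bs" for b
  proof -
    have "set b \<subseteq> set (concat bs)" using that by auto
    then show ?thesis using bs(2) ws(2) by blast
  qed
  let ?fs = "map (fp G) bs"
  have fsm: "set ?fs \<subseteq> mon_gen G X" using bX unfolding mon_gen_def by auto
  have "fp G ?fs = fp G (concat bs)" using bX X by (intro fp_concat[symmetric]) auto
  then have fpg: "fp G ?fs = g" using bs ws by simp
  have le: "list_all2 (\<le>) (map ?l ?fs) ?cs"
  proof (rule list_all2_all_nthI)
    show "length (map ?l ?fs) = length ?cs" using bs by simp
    fix i assume i: "i < length (map ?l ?fs)"
    then have "set (bs!i) \<subseteq> X" using bX by auto
    then have "?l (fp G (bs!i)) \<le> length (bs!i)" by (rule word_len_le) simp
    then show "map ?l ?fs ! i \<le> ?cs ! i" using i bs by auto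
  qed
  have "?n \<le> sum_list (map ?l ?fs)" using word_len_fp[OF X fsm] fpg by simp
  then have "sum_list ?cs \<le> sum_list (map ?l ?fs)" using scs ws by simp
  then have eqc: "map ?l ?fs = ?cs" using pointwise_eq[OF le] by simp
  have Lc: "Lmap G X ?fs = c" unfolding Lmap_def
  proof -
    have "map (\<lambda>x. int (?l x)) ?fs = map int (map ?l ?fs)" by simp
    also have "\<dots> = map int ?cs" using eqc by simp
    also have "\<dots> = c" using cnn by (induction c) auto
    finally show "map (\<lambda>x. int (?l x)) ?fs = c" .
  qed
  have nzf: "?fs ! i \<noteq> \<one>" if "0 < i" "i < length ?fs - 1" for i
  proof
    assume "?fs ! i = \<one>"
    then have "?l (?fs ! i) = 0" using word_len_one by simp
    have i: "i < length ?fs" using that by simp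
    have "?cs ! i = map ?l ?fs ! i" using eqc by simp
    also have "\<dots> = ?l (?fs ! i)" using i by (simp only: nth_map)
    finally have "?cs ! i = 0" using \<open>?l (?fs ! i) = 0\<close> by simp
    moreover have "c ! i \<noteq> 0" "0 \<le> c ! i" using cnz cnn that bs by auto
    ultimately show False using that bs by simp
  qed
  have "?fs \<in> lin_fact G X g" unfolding lin_fact_def
  proof (intro CollectI conjI allI impI)
    show "2 \<le> length ?fs" using bs cl by simp
    show "set ?fs \<subseteq> mon_gen G X" by (rule fsm)
    show "fp G ?fs = g" by (rule fpg)
    show "sum_list (map ?l ?fs) = ?l g" using eqc scs ws by simp
    fix i assume "0 < i \<and> i < length ?fs - 1"
    then show "?fs ! i \<noteq> \<one>" using nzf by blast
  qed
  then show ?thesis using Lc by blast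
qed

end




lemma Lmap_merge: assumes "length A = i"
  "word_len G X (a \<otimes>\<^bsub>G\<^esub> b) = word_len G X a + word_len G X b"
  shows "Lmap G X (A @ (a \<otimes>\<^bsub>G\<^esub> b) # B) = merge_at integer_group i (Lmap G X (A @ a # b # B))"
proof -
  have "merge_at integer_group i (Lmap G X (A @ a # b # B))
     = Lmap G X A @ (int (word_len G X a) \<otimes>\<^bsub>integer_group\<^esub> int (word_len G X b)) # Lmap G X B"
    unfolding Lmap_def using assms(1) by (simp add: merge_at_decomp)
  then show ?thesis using assms(2) unfolding Lmap_def by simp
qed

context group begin

lemma fact_le_lin: assumes X: "X \<subseteq> carrier G" and le: "fact_le G xs ys"
  and ys: "ys \<in> lin_fact G X g" and len: "2 \<le> length xs"
  shows "xs \<in> lin_fact G X g \<and> fact_le integer_group (Lmap G X xs) (Lmap G X ys)"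
  using le len unfolding fact_le_def
proof (induction rule: converse_rtranclp_induct)
  case base
  then show ?case using ys by simp
next
  case (step y z)
  obtain i where i: "i + 2 \<le> length z" "y = merge_at G i z" using step.hyps(1) unfolding merge_step_def by blast
  obtain A a b B where z: "z = A @ a # b # B" "length A = i" using decomp4[OF i(1)] by blast
  have y: "y = A @ (a \<otimes> b) # B" using i(2) z by (simp add: merge_at_decomp)
  have AB: "A \<noteq> [] \<or> B \<noteq> []" using step.prems y by (cases A; cases B) auto
  have "2 \<le> length z" using z by simp
  then have IH: "z \<in> lin_fact G X g" "(merge_step integer_group)\<^sup>*\<^sup>* (Lmap G X z) (Lmap G X ys)"
    using step.IH by auto
  have m: "y \<in> lin_fact G X g \<and> word_len G X (a \<otimes> b) = word_len G X a + word_len G X b"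
    using lin_fact_merge[OF X _ AB] IH(1) z y by simp
  have "Lmap G X y = merge_at integer_group i (Lmap G X z)"
    using Lmap_merge[OF z(2), of G X a b B] m y z by simp
  moreover have "i + 2 \<le> length (Lmap G X z)" using i unfolding Lmap_def by simp
  ultimately have "merge_step integer_group (Lmap G X y) (Lmap G X z)"
    unfolding merge_step_def by blast
  then show ?case using m IH(2) by (simp add: converse_rtranclp_into_rtranclp)
qed

end

lemma equiv_circ: "equiv (lin_fact G X g) (circ_equiv G X g)"
proof (rule equivI)
  show "circ_equiv G X g \<subseteq> lin_fact G X g \<times> lin_fact G X g" unfolding circ_equiv_def by auto
  show "refl_on (lin_fact G X g) (circ_equiv G X g)" unfolding refl_on_def circ_equiv_def by auto
  show "sym (circ_equiv G X g)" unfolding sym_def circ_equiv_def by auto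
  show "trans (circ_equiv G X g)" unfolding trans_def circ_equiv_def by auto
qed

context group begin

lemma L_equiv: assumes X: "X \<subseteq> carrier G" and e: "(xs, r) \<in> circ_equiv G X g"
  shows "(Lmap G X xs, Lmap G X r) \<in> circ_equiv integer_group {1} (int (word_len G X g))"
proof -
  have xs: "xs \<in> lin_fact G X g" and r: "r \<in> lin_fact G X g" and l: "length xs = length r"
    and inn: "\<forall>i. 0 < i \<and> i < length xs - 1 \<longrightarrow> xs ! i = r ! i"
    using e unfolding circ_equiv_def by auto
  show ?thesis unfolding circ_equiv_def
    using L_into[OF X xs] L_into[OF X r] l inn by (auto simp: Lmap_def)
qed

lemma inv_cancel1: "x \<in> carrier G \<Longrightarrow> y \<in> carrier G \<Longrightarrow> inv x \<otimes> (x \<otimes> y) = y"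
  by (simp add: m_assoc[symmetric])

lemma inv_cancel2: "x \<in> carrier G \<Longrightarrow> y \<in> carrier G \<Longrightarrow> x \<otimes> (inv x \<otimes> y) = y"
  by (simp add: m_assoc[symmetric])

lemma rep_exists: assumes X: "X \<subseteq> carrier G" and cc: "conj_closed G X"
  and g: "g \<in> mon_gen G X" and xs: "xs \<in> lin_fact G X g"
  shows "\<exists>r. (xs, r) \<in> circ_equiv G X g \<and> last r = \<one>"
proof -
  let ?l = "word_len G X"
  have l: "2 \<le> length xs" and s: "set xs \<subseteq> mon_gen G X"
    and nz: "\<forall>i. 0 < i \<and> i < length xs - 1 \<longrightarrow> xs ! i \<noteq> \<one>"
    and sl: "sum_list (map ?l xs) = ?l g" and pr: "fp G xs = g"
    using xs unfolding lin_fact_def by auto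
  obtain xL t where t: "xs = xL # t" using l by (cases xs) auto
  have "t \<noteq> []" using t l by auto
  then have "t = butlast t @ [last t]" by simp
  then obtain mid xR where xs_eq: "xs = xL # mid @ [xR]" using t by metis
  have mc: "mon_gen G X \<subseteq> carrier G" by (rule mon_gen_sub[OF X])
  have xLm: "xL \<in> mon_gen G X" and xRm: "xR \<in> mon_gen G X" and midm: "set mid \<subseteq> mon_gen G X"
    using s xs_eq by auto
  have xLc: "xL \<in> carrier G" and xRc: "xR \<in> carrier G" and midc: "set mid \<subseteq> carrier G"
    and gc: "g \<in> carrier G"
    using xLm xRm midm g mc by auto
  define P where "P = fp G mid"
  have Pc: "P \<in> carrier G" unfolding P_def using midc by (rule fp_closed)
  have "fp G xs = xL \<otimes> fp G (mid @ [xR])" using xs_eq by simp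
  also have "fp G (mid @ [xR]) = P \<otimes> fp G [xR]" unfolding P_def using midc xRc
    by (intro fp_append) auto
  finally have g_eq: "g = xL \<otimes> (P \<otimes> xR)" using pr xRc by simp
  have e1: "xL \<otimes> P = g \<otimes> inv xR" using g_eq xLc Pc xRc by (simp add: m_assoc)
  define h where "h = g \<otimes> xR \<otimes> inv g"
  have hm: "h \<in> mon_gen G X" and hl: "?l h \<le> ?l xR"
    using conj_mon_gen[OF X cc xRm gc] unfolding h_def by auto
  have hc: "h \<in> carrier G" using hm mc by auto
  define c where "c = h \<otimes> xL"
  have cm: "c \<in> mon_gen G X" unfolding c_def by (rule mon_gen_mult[OF X hm xLm])
  have cl: "?l c \<le> ?l xR + ?l xL" using word_len_mult[OF X hm xLm] hl unfolding c_def by simp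
  define r where "r = c # mid @ [\<one>]"
  have cc': "c \<in> carrier G" using cm mc by auto
  have "fp G r = c \<otimes> P" unfolding r_def P_def using midc cc'
    by (simp add: fp_append fp_closed del: foldr_append)
  also have "\<dots> = h \<otimes> (xL \<otimes> P)" unfolding c_def using hc xLc Pc by (simp add: m_assoc)
  also have "\<dots> = g \<otimes> xR \<otimes> inv g \<otimes> (g \<otimes> inv xR)" unfolding h_def using e1 by simp
  also have "\<dots> = g" using gc xRc by (simp add: m_assoc inv_cancel1)
  finally have rpr: "fp G r = g" .
  have rs: "set r \<subseteq> mon_gen G X" unfolding r_def using cm midm one_mon_gen by auto
  have "?l g \<le> sum_list (map ?l r)" using word_len_fp[OF X rs] rpr by simp
  moreover have "sum_list (map ?l r) = ?l c + sum_list (map ?l mid)" unfolding r_def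
    by (simp add: word_len_one)
  moreover have "sum_list (map ?l xs) = ?l xL + sum_list (map ?l mid) + ?l xR" using xs_eq by simp
  ultimately have rsl: "sum_list (map ?l r) = ?l g" using sl cl by linarith
  have lr: "length r = length xs" unfolding r_def using xs_eq by simp
  have inn: "r ! i = xs ! i" if i0: "0 < i" and i1: "i < length xs - 1" for i
  proof -
    obtain j where j: "i = Suc j" using i0 by (cases i) auto
    have "j < length mid" using i1 j xs_eq by simp
    then show ?thesis unfolding r_def using xs_eq j by (simp add: nth_append)
  qed
  have rl: "r \<in> lin_fact G X g" unfolding lin_fact_def
  proof (intro CollectI conjI allI impI)
    show "2 \<le> length r" using lr l by simp
    show "set r \<subseteq> mon_gen G X" by (rule rs)
    show "sum_list (map ?l r) = ?l g" by (rule rsl)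
    show "fp G r = g" by (rule rpr)
    fix i assume "0 < i \<and> i < length r - 1"
    then show "r ! i \<noteq> \<one>" using inn nz lr by auto
  qed
  have "(xs, r) \<in> circ_equiv G X g" unfolding circ_equiv_def using xs rl lr inn by auto
  moreover have "last r = \<one>" unfolding r_def by simp
  ultimately show ?thesis by blast
qed

lemma rep_unique: assumes X: "X \<subseteq> carrier G"
  and e1: "(xs, r1) \<in> circ_equiv G X g" and e2: "(xs, r2) \<in> circ_equiv G X g"
  and l1: "last r1 = \<one>" and l2: "last r2 = \<one>"
  shows "r1 = r2"
proof -
  have r1: "r1 \<in> lin_fact G X g" and r2: "r2 \<in> lin_fact G X g"
    and len1: "length xs = length r1" and len2: "length xs = length r2"
    and in1: "\<forall>i. 0 < i \<and> i < length xs - 1 \<longrightarrow> xs ! i = r1 ! i"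
    and in2: "\<forall>i. 0 < i \<and> i < length xs - 1 \<longrightarrow> xs ! i = r2 ! i"
    using e1 e2 unfolding circ_equiv_def by auto
  have ll: "2 \<le> length r1" using r1 unfolding lin_fact_def by auto
  have tl_eq: "tl r1 = tl r2"
  proof (rule nth_equalityI)
    show "length (tl r1) = length (tl r2)" using len1 len2 by simp
    fix j assume j: "j < length (tl r1)"
    show "tl r1 ! j = tl r2 ! j"
    proof (cases "Suc j < length xs - 1")
      case True
      have "tl r1 ! j = r1 ! Suc j" "tl r2 ! j = r2 ! Suc j" using j len1 len2 by (simp_all add: nth_tl)
      moreover have "xs ! Suc j = r1 ! Suc j" "xs ! Suc j = r2 ! Suc j" using in1 in2 True by auto
      ultimately show ?thesis by simp
    next
      case False
      then have "Suc j = length r1 - 1" "Suc j = length r2 - 1" using j len1 len2 by auto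
      moreover have "last r1 = r1 ! (length r1 - 1)" "last r2 = r2 ! (length r2 - 1)"
        using ll len1 len2 by (metis last_conv_nth list.size(3) not_numeral_le_zero)+
      ultimately show ?thesis using l1 l2 ll len1 len2 j by (simp add: nth_tl)
    qed
  qed
  have mc: "mon_gen G X \<subseteq> carrier G" by (rule mon_gen_sub[OF X])
  have s1: "set r1 \<subseteq> carrier G" and s2: "set r2 \<subseteq> carrier G"
    using r1 r2 mc unfolding lin_fact_def by auto
  have ne1: "r1 \<noteq> []" and ne2: "r2 \<noteq> []" using ll len1 len2 by auto
  have d1: "r1 = hd r1 # tl r1" and d2: "r2 = hd r2 # tl r2" using ne1 ne2 by simp_all
  have "fp G r1 = fp G r2" using r1 r2 unfolding lin_fact_def by simp
  then have "hd r1 \<otimes> fp G (tl r1) = hd r2 \<otimes> fp G (tl r1)" using d1 d2 tl_eq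
    by (metis foldr.simps(2) o_apply)
  moreover have "hd r1 \<in> carrier G" "hd r2 \<in> carrier G" "fp G (tl r1) \<in> carrier G"
    using s1 s2 ne1 ne2 by (auto intro!: fp_closed dest: list.set_sel(2))
  ultimately have "hd r1 = hd r2" by simp
  then show ?thesis using d1 d2 tl_eq by metis
qed

end




context group begin

lemma Lbar_class: assumes X: "X \<subseteq> carrier G" and cc: "conj_closed G X"
  and g: "g \<in> mon_gen G X" and xs: "xs \<in> lin_fact G X g"
  shows "Lbar G X g (circ_class G X g xs)
     = circ_class integer_group {1} (int (word_len G X g)) (Lmap G X xs)"
proof -
  obtain r where r: "(xs, r) \<in> circ_equiv G X g" "last r = \<one>"
    using rep_exists[OF X cc g xs] by blast
  have "(THE r'. r' \<in> circ_class G X g xs \<and> last r' = \<one>) = r"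
  proof (rule the_equality)
    show "r \<in> circ_class G X g xs \<and> last r = \<one>" using r unfolding circ_class_def by simp
    fix r' assume "r' \<in> circ_class G X g xs \<and> last r' = \<one>"
    then show "r' = r" using rep_unique[OF X _ r(1) _ r(2)] unfolding circ_class_def by simp
  qed
  then have "Lbar G X g (circ_class G X g xs)
     = circ_class integer_group {1} (int (word_len G X g)) (Lmap G X r)"
    unfolding Lbar_def by simp
  also have "\<dots> = circ_class integer_group {1} (int (word_len G X g)) (Lmap G X xs)"
    unfolding circ_class_def using equiv_class_eq[OF equiv_circ L_equiv[OF X r(1)]] by simp
  finally show ?thesis .
qed

end

lemma class_of_mem: assumes "A \<in> circ_fact G X g" "xs \<in> A"
  shows "A = circ_class G X g xs" "xs \<in> lin_fact G X g"
proof -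
  obtain a where a: "A = circ_equiv G X g `` {a}" "a \<in> lin_fact G X g"
    using assms(1) unfolding circ_fact_def by (rule quotientE)
  then have "(a, xs) \<in> circ_equiv G X g" using assms(2) by simp
  moreover note eq = equiv_class_eq[OF equiv_circ this]
  ultimately show "A = circ_class G X g xs" "xs \<in> lin_fact G X g"
    using a unfolding circ_class_def circ_equiv_def by simp_all
qed




theorem proposition3p11:
  fixes G :: "('a, 'b) monoid_scheme" and X :: "'a set" and g :: 'a and n :: nat
  assumes "group G"
    and "X \<subseteq> carrier G"
    and "generate G X = carrier G"
    and "conj_closed G X"
    and "g \<in> mon_gen G X"
    and "n = word_len G X g"
  shows "Lmap G X ` lin_fact G X g = lin_comp n
    \<and> (\<forall>xs\<in>lin_fact G X g. \<forall>ys\<in>lin_fact G X g.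
          fact_le G xs ys \<longrightarrow> fact_le integer_group (Lmap G X xs) (Lmap G X ys))
    \<and> Lbar G X g ` circ_fact G X g = circ_comp n
    \<and> (\<forall>A\<in>circ_fact G X g. \<forall>B\<in>circ_fact G X g.
          circ_le G A B \<longrightarrow> circ_le integer_group (Lbar G X g A) (Lbar G X g B))
    \<and> (\<forall>xs\<in>lin_fact G X g.
          Lbar G X g (circ_class G X g xs) = circ_class integer_group {1} (int n) (Lmap G X xs))"
proof -
  interpret group G by (rule assms(1))
  note X = assms(2) and cc = assms(4) and g = assms(5) and n = assms(6)
  have P1: "Lmap G X ` lin_fact G X g = lin_comp n"
  proof
    show "Lmap G X ` lin_fact G X g \<subseteq> lin_comp n" using L_into[OF X] n by auto
    show "lin_comp n \<subseteq> Lmap G X ` lin_fact G X g"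
    proof
      fix c assume "c \<in> lin_comp n"
      then obtain xs where "xs \<in> lin_fact G X g" "Lmap G X xs = c" using L_surj[OF X g] n by blast
      then show "c \<in> Lmap G X ` lin_fact G X g" by blast
    qed
  qed
  have P2: "fact_le integer_group (Lmap G X xs) (Lmap G X ys)"
    if "xs \<in> lin_fact G X g" "ys \<in> lin_fact G X g" "fact_le G xs ys" for xs ys
  proof -
    have "2 \<le> length xs" using that(1) unfolding lin_fact_def by auto
    then show ?thesis using fact_le_lin[OF X that(3) that(2)] by blast
  qed
  have P5: "Lbar G X g (circ_class G X g xs) = circ_class integer_group {1} (int n) (Lmap G X xs)"
    if "xs \<in> lin_fact G X g" for xs
    using Lbar_class[OF X cc g that] n by simp
  have P3: "Lbar G X g ` circ_fact G X g = circ_comp n"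
  proof
    show "Lbar G X g ` circ_fact G X g \<subseteq> circ_comp n"
    proof
      fix C assume "C \<in> Lbar G X g ` circ_fact G X g"
      then obtain A where A: "A \<in> circ_fact G X g" "C = Lbar G X g A" by blast
      obtain xs where xs: "A = circ_equiv G X g `` {xs}" "xs \<in> lin_fact G X g"
        using A(1) unfolding circ_fact_def by (rule quotientE)
      have "C = circ_class integer_group {1} (int n) (Lmap G X xs)"
        using A(2) xs P5[OF xs(2)] unfolding circ_class_def by simp
      moreover have "Lmap G X xs \<in> lin_comp n" unfolding P1[symmetric] using xs(2) by (rule imageI)
      ultimately show "C \<in> circ_comp n" unfolding circ_fact_def circ_class_def by (simp add: quotientI)
    qed
    show "circ_comp n \<subseteq> Lbar G X g ` circ_fact G X g"
    proof
      fix C assume "C \<in> circ_comp n"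
      then obtain c where c: "C = circ_equiv integer_group {1} (int n) `` {c}" "c \<in> lin_comp n"
        unfolding circ_fact_def by (rule quotientE)
      have "c \<in> Lmap G X ` lin_fact G X g" using c(2) unfolding P1 .
      then obtain xs where xs: "xs \<in> lin_fact G X g" "Lmap G X xs = c" by (rule imageE) simp
      have "C = Lbar G X g (circ_class G X g xs)" using P5[OF xs(1)] c xs(2) unfolding circ_class_def by simp
      moreover have "circ_class G X g xs \<in> circ_fact G X g"
        unfolding circ_class_def circ_fact_def using xs(1) by (rule quotientI)
      ultimately show "C \<in> Lbar G X g ` circ_fact G X g" by blast
    qed
  qed
  have P4: "circ_le integer_group (Lbar G X g A) (Lbar G X g B)"
    if A: "A \<in> circ_fact G X g" and B: "B \<in> circ_fact G X g" and le: "circ_le G A B" for A B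
  proof -
    obtain xs ys where xy: "xs \<in> A" "ys \<in> B" "fact_le G xs ys" using le unfolding circ_le_def by blast
    have ca: "A = circ_class G X g xs" "xs \<in> lin_fact G X g" using class_of_mem[OF A xy(1)] by auto
    have cb: "B = circ_class G X g ys" "ys \<in> lin_fact G X g" using class_of_mem[OF B xy(2)] by auto
    have "Lmap G X xs \<in> lin_comp n" "Lmap G X ys \<in> lin_comp n" unfolding P1[symmetric] using ca(2) cb(2) by (simp_all add: imageI)
    then have "Lmap G X xs \<in> circ_class integer_group {1} (int n) (Lmap G X xs)"
       "Lmap G X ys \<in> circ_class integer_group {1} (int n) (Lmap G X ys)"
      unfolding circ_class_def circ_equiv_def by auto
    then have "Lmap G X xs \<in> Lbar G X g A" "Lmap G X ys \<in> Lbar G X g B"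
      using P5[OF ca(2)] ca(1) P5[OF cb(2)] cb(1) by simp_all
    then show ?thesis unfolding circ_le_def using P2[OF ca(2) cb(2) xy(3)] by blast
  qed
  show ?thesis
  proof (intro conjI ballI impI)
    show "Lmap G X ` lin_fact G X g = lin_comp n" by (rule P1)
    show "Lbar G X g ` circ_fact G X g = circ_comp n" by (rule P3)
  next
    fix xs ys assume "xs \<in> lin_fact G X g" "ys \<in> lin_fact G X g" "fact_le G xs ys"
    then show "fact_le integer_group (Lmap G X xs) (Lmap G X ys)" by (rule P2)
  next
    fix A B assume "A \<in> circ_fact G X g" "B \<in> circ_fact G X g" "circ_le G A B"
    then show "circ_le integer_group (Lbar G X g A) (Lbar G X g B)" by (rule P4)
  next
    fix xs assume "xs \<in> lin_fact G X g"
    then show "Lbar G X g (circ_class G X g xs) = circ_class integer_group {1} (int n) (Lmap G X xs)"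
      by (rule P5)
  qed
qed


end
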